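(* Assume $\nu$ satisfies Assumption (A), $\mathcal M$ satisfies Assumption (B), let $0<\gamma<1$, $\delta_1\in(0,1)$, and assume $M_1\ge-\ln(\delta_1/C)\frac{1}{c\,\phi(\kappa_0)}$ with $\kappa_0=\frac{(1-\gamma^2)\widehat\sigma_0(\mathcal M)^2}{8K_\infty K_{\mathcal L}}$, where $\widehat\sigma_0(\mathcal M)^2=\max_{\mu\in\mathcal P}\mathrm{Var}[g_\mu(Z)]$. Then $$\mathbb{P}\Big[\mathrm{Var}\big[g_{\overline\mu_1}(Z)\mid\overline Z^{1:\infty}\big]\ge\gamma^2\max_{\mu\in\mathcal P}\mathrm{Var}\big[g_\mu(Z)\mid\overline Z^{1:\infty}\big]\Big]\ge1-\delta_1,$$ i.e. $\mathbb{P}[\overline\sigma_0(\mathcal M)\ge\gamma\widehat\sigma_0(\mathcal M)]\ge1-\delta_1$, where $\overline\sigma_0(\mathcal M)=\sqrt{\mathrm{Var}[g_{\overline\mu_1}(Z)\mid\overline Z^{1:\infty}]}$.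
   Context: $Z$ is an $\mathbb{R}^d$-valued random vector with law $\nu$; $L^2_{\nu,0}(\mathbb{R}^d)=\{g\in L^2_\nu:\int g\,d\nu=0\}$, $\|g\|=\sqrt{\mathrm{Var}[g(Z)]}$. $\mathcal P\subset\mathbb{R}^p$; $f_\mu$ continuous, in $L^2_\nu$; $g_\mu=f_\mu-\mathbb{E}[f_\mu(Z)]$; $\mathcal M=\{g_\mu:\mu\in\mathcal P\}$; $d_n(\mathcal M)=\inf_{V_n}\sup_\mu\inf_{h\in V_n}\|g_\mu-h\|$ over $n$-dimensional subspaces $V_n$. $\mathcal L$: Lipschitz functions, $\|f\|_{\mathcal L}$ Lipschitz constant. For $\overline Z=(Z_k)_{k\le M}$: $\mathbb{E}_{\overline Z}(f)=\frac1M\sum_kf(Z_k)$, $\mathrm{Var}_{\overline Z}(f)=\mathbb{E}_{\overline Z}(f^2)-\mathbb{E}_{\overline Z}(f)^2$. $\overline Z^n=(Z^n_k)_{1\le k\le M_n}$, all $Z^n_k$ i.i.d. with law $\nu$ independent of $Z$, $\overline Z^{1:\infty}=(\overline Z^n)_n$. $\overline\mu_1\in\operatorname{argmax}_{\mu\in\mathcal P}\mathrm{Var}_{\overline Z^1}(g_\mu)$ with $g_{\overline\mu_1}\ne0$ (first step of the MC-greedy algorithm). Assumption (A): $\exists\alpha>1,\beta>0$ with $\int_{\mathbb{R}^d}e^{\beta|x|^\alpha}d\nu(x)<\infty$. $\phi(\kappa)=\kappa^2\mathbf 1_{\kappa\le1}+\kappa^\alpha\mathbf 1_{\kappa>1}$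 ($d=1$), $(\kappa/\log(2+1/\kappa))^2\mathbf 1_{\kappa\le1}+\kappa^\alpha\mathbf 1_{\kappa>1}$ ($d=2$), $\kappa^d\mathbf 1_{\kappa\le1}+\kappa^\alpha\mathbf 1_{\kappa>1}$ ($d\ge3$). $c,C>0$ are constants (depending on $\nu,d,\alpha,\beta$; they exist under (A) by Fournier–Guillin) such that for all $M$, all i.i.d. $\overline Z=(Z_k)_{k\le M}$ of law $\nu$, all $\kappa>0$: $\mathbb{P}[\sup_{\|f\|_{\mathcal L}\le1}|\mathbb{E}[f(Z)]-\mathbb{E}_{\overline Z}(f)|\ge\kappa]\le Ce^{-cM\phi(\kappa)}$. Assumption (B): (B1) $\mathcal M$ compact in $L^2_{\nu,0}$, $K_2=\sup_\mu\|g_\mu\|<\infty$; (B2) $\mathcal M\subset\mathcal L$, $K_{\mathcal L}=\sup_\mu\|g_\mu\|_{\mathcal L}<\infty$; (B3) $\mathcal M\subset L^\infty$, $K_\infty=\sup_\mu\|g_\mu\|_{L^\infty}<\infty$; (B4) $d_n(\mathcal M)>0$ for all $n$. *)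

theory Defs
  imports "HOL-Probability.Probability"
begin

definition var_nu :: "'a measure \<Rightarrow> ('a \<Rightarrow> real) \<Rightarrow> real" where
  "var_nu nu h = (\<integral>x. (h x)\<^sup>2 \<partial>nu) - (\<integral>x. h x \<partial>nu)\<^sup>2"

definition centered :: "'a measure \<Rightarrow> ('p \<Rightarrow> 'a \<Rightarrow> real) \<Rightarrow> 'p \<Rightarrow> 'a \<Rightarrow> real" where
  "centered nu f mu x = f mu x - (\<integral>y. f mu y \<partial>nu)"

definition l2dist :: "'a measure \<Rightarrow> ('a \<Rightarrow> real) \<Rightarrow> ('a \<Rightarrow> real) \<Rightarrow> real" where
  "l2dist nu u v = sqrt (\<integral>x. (u x - v x)\<^sup>2 \<partial>nu)"

definition emp_mean :: "nat \<Rightarrow> (nat \<Rightarrow> 'a) \<Rightarrow> ('a \<Rightarrow> real) \<Rightarrow> real" where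
  "emp_mean M z h = (\<Sum>k<M. h (z k)) / real M"

definition emp_var :: "nat \<Rightarrow> (nat \<Rightarrow> 'a) \<Rightarrow> ('a \<Rightarrow> real) \<Rightarrow> real" where
  "emp_var M z h = emp_mean M z (\<lambda>x. (h x)\<^sup>2) - (emp_mean M z h)\<^sup>2"

definition lip_const :: "('a::metric_space \<Rightarrow> real) \<Rightarrow> real" where
  "lip_const h = Inf {L. L-lipschitz_on UNIV h}"

definition linf_norm :: "'a measure \<Rightarrow> ('a \<Rightarrow> real) \<Rightarrow> ereal" where
  "linf_norm nu h = esssup nu (\<lambda>x. ereal \<bar>h x\<bar>)"

text \<open>Kolmogorov n-width of {g mu | mu in P} in L^2_{nu,0}: infimum over n-dimensional
  subspaces V_n = span{b_0,...,b_{n-1}} of L^2_{nu,0} (basis functions square-integrable,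
  centered, and linearly independent as elements of L^2_nu) of
  sup_mu inf_{h in V_n} ||g_mu - h||.\<close>
definition is_l2_0_basis :: "'a measure \<Rightarrow> nat \<Rightarrow> (nat \<Rightarrow> 'a \<Rightarrow> real) \<Rightarrow> bool" where
  "is_l2_0_basis nu n b \<longleftrightarrow>
     (\<forall>i<n. b i \<in> borel_measurable nu \<and> integrable nu (\<lambda>x. (b i x)\<^sup>2)
            \<and> (\<integral>x. b i x \<partial>nu) = 0) \<and>
     (\<forall>c::nat \<Rightarrow> real. (AE x in nu. (\<Sum>i<n. c i * b i x) = 0) \<longrightarrow> (\<forall>i<n. c i = 0))"

definition kolmogorov_width :: "'a measure \<Rightarrow> ('p \<Rightarrow> 'a \<Rightarrow> real) \<Rightarrow> 'p set \<Rightarrow> nat \<Rightarrow> real" where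
  "kolmogorov_width nu g P n =
     Inf ((\<lambda>b. SUP mu\<in>P. INF c\<in>(UNIV::(nat \<Rightarrow> real) set).
              l2dist nu (g mu) (\<lambda>x. \<Sum>i<n. c i * b i x))
          ` {b. is_l2_0_basis nu n b})"

definition phi_FG :: "nat \<Rightarrow> real \<Rightarrow> real \<Rightarrow> real" where
  "phi_FG d alpha k =
     (if k \<le> 1 then
        (if d = 1 then k\<^sup>2
         else if d = 2 then (k / ln (2 + 1 / k))\<^sup>2
         else k ^ d)
      else k powr alpha)"

end

theory Submission
  imports Defs
begin


locale nuctx = prob_space nu for nu :: "'a::euclidean_space measure" +
  assumes nu_borel: "sets nu = sets borel"
begin

lemma space_nu: "space nu = UNIV"
  using sets_eq_imp_space_eq[OF nu_borel] by simp

lemma meas_nu: "f \<in> borel_measurable borel \<Longrightarrow> f \<in> borel_measurable nu"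
  using measurable_cong_sets[OF nu_borel refl] by blast

lemma cont_meas: "continuous_on UNIV f \<Longrightarrow> f \<in> borel_measurable nu"
  by (intro meas_nu borel_measurable_continuous_onI)

lemma first_moment:
  assumes alpha: "alpha > 1" and beta: "beta > 0"
    and expmom: "integrable nu (\<lambda>x. exp (beta * norm x powr alpha))"
  shows "integrable nu (\<lambda>x. norm x)"
proof -
  have i: "integrable nu (\<lambda>x. 1 + exp (beta * norm x powr alpha) / beta)"
    using expmom by auto
  have m: "(\<lambda>x. norm x) \<in> borel_measurable nu" by (intro cont_meas continuous_intros)
  have "AE x in nu. norm (norm x) \<le> norm (1 + exp (beta * norm x powr alpha) / beta)"
  proof (intro AE_I2)
    fix x :: 'a
    have e: "exp (beta * norm x powr alpha) / beta > 0" using beta by simp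
    have "norm x \<le> 1 + exp (beta * norm x powr alpha) / beta"
    proof (cases "norm x \<le> 1")
      case True then show ?thesis using e by linarith
    next
      case False
      then have "norm x \<le> norm x powr alpha"
        using alpha powr_mono[of 1 alpha "norm x"] by simp
      also have "\<dots> \<le> exp (beta * norm x powr alpha) / beta"
      proof -
        have "beta * norm x powr alpha \<le> exp (beta * norm x powr alpha)"
          using exp_ge_add_one_self[of "beta * norm x powr alpha"] by linarith
        then show ?thesis using beta by (simp add: field_simps)
      qed
      finally show ?thesis using e by linarith
    qed
    then show "norm (norm x) \<le> norm (1 + exp (beta * norm x powr alpha) / beta)"
      using e by simp
  qed
  then show ?thesis using Bochner_Integration.integrable_bound[OF i m] by simp
qed

lemma lip_meas: "L-lipschitz_on UNIV h \<Longrightarrow> h \<in> borel_measurable nu"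
  by (intro cont_meas lipschitz_on_continuous_on)

lemma lip_integrable:
  fixes h :: "'a \<Rightarrow> real"
  assumes nm: "integrable nu (\<lambda>x. norm x)" and L: "L-lipschitz_on UNIV h"
  shows "integrable nu h"
proof -
  have i: "integrable nu (\<lambda>x. \<bar>h 0\<bar> + L * norm x)" using nm by auto
  have "AE x in nu. norm (h x) \<le> norm (\<bar>h 0\<bar> + L * norm x)"
  proof (intro AE_I2)
    fix x
    have a: "\<bar>h x - h 0\<bar> \<le> L * norm x" using lipschitz_onD[OF L, of x 0] by (simp add: dist_real_def)
    have b: "0 \<le> L * norm x" using lipschitz_on_nonneg[OF L] by simp
    have "\<bar>h x\<bar> \<le> \<bar>h 0\<bar> + L * norm x" using a abs_triangle_ineq[of "h x - h 0" "h 0"] by simp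
    then show "norm (h x) \<le> norm (\<bar>h 0\<bar> + L * norm x)" using b by simp
  qed
  then show ?thesis using Bochner_Integration.integrable_bound[OF i lip_meas[OF L]] by simp
qed

lemma dist_integrable:
  assumes nm: "integrable nu (\<lambda>x. norm x)"
  shows "integrable nu (\<lambda>x. dist x y)"
proof -
  have "1-lipschitz_on UNIV (\<lambda>x. dist x y)"
    by (intro lipschitz_onI) (auto simp: dist_real_def abs_le_iff, (metis dist_commute dist_triangle2 add.commute diff_le_eq)+)
  then show ?thesis using lip_integrable[OF nm] by blast
qed

lemma emp_bound:
  fixes h :: "'a \<Rightarrow> real"
  assumes nm: "integrable nu (\<lambda>x. norm x)" and M: "M > 0"
    and L: "1-lipschitz_on UNIV h"
  shows "\<bar>(\<integral>x. h x \<partial>nu) - emp_mean M z h\<bar> \<le> (\<Sum>k<M. \<integral>x. dist x (z k) \<partial>nu) / real M"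
proof -
  have ih: "integrable nu h" using lip_integrable[OF nm L] .
  have eq: "(\<integral>x. h x \<partial>nu) - emp_mean M z h = (\<Sum>k<M. (\<integral>x. h x \<partial>nu) - h (z k)) / real M"
    using M by (simp add: emp_mean_def sum_subtractf field_simps)
  have b: "\<bar>(\<integral>x. h x \<partial>nu) - h (z k)\<bar> \<le> (\<integral>x. dist x (z k) \<partial>nu)" for k
  proof -
    have "(\<integral>x. h x \<partial>nu) - h (z k) = (\<integral>x. h x - h (z k) \<partial>nu)"
      using ih by (simp add: prob_space)
    also have "\<bar>\<dots>\<bar> \<le> (\<integral>x. dist x (z k) \<partial>nu)"
    proof (rule integral_abs_bound_integral)
      show "integrable nu (\<lambda>x. h x - h (z k))" using ih by auto
      show "integrable nu (\<lambda>x. dist x (z k))" using dist_integrable[OF nm] .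
      show "\<bar>h x - h (z k)\<bar> \<le> dist x (z k)" for x
        using lipschitz_onD[OF L, of x "z k"] by (simp add: dist_real_def)
    qed
    finally show ?thesis .
  qed
  have "\<bar>\<Sum>k<M. (\<integral>x. h x \<partial>nu) - h (z k)\<bar> \<le> (\<Sum>k<M. \<integral>x. dist x (z k) \<partial>nu)"
    by (rule order_trans[OF sum_abs sum_mono]) (rule b)
  then show ?thesis unfolding eq using M by (simp add: divide_right_mono)
qed

lemma clip_lip: "\<bar>max (-B) (min B a) - max (-B) (min B b)\<bar> \<le> \<bar>a - b\<bar>" for a b B :: real
  by (simp add: max_def min_def abs_le_iff) linarith

lemma clip_sq_lip:
  fixes B a b :: real assumes "B > 0"
  shows "\<bar>(max (-B) (min B a))\<^sup>2 - (max (-B) (min B b))\<^sup>2\<bar> \<le> 2 * B * \<bar>a - b\<bar>"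
proof -
  let ?a = "max (-B) (min B a)" and ?b = "max (-B) (min B b)"
  have "\<bar>?a\<^sup>2 - ?b\<^sup>2\<bar> = \<bar>?a - ?b\<bar> * \<bar>?a + ?b\<bar>"
    by (simp add: power2_eq_square abs_mult[symmetric] algebra_simps)
  also have "\<dots> \<le> \<bar>a - b\<bar> * (2 * B)"
    using assms by (intro mult_mono clip_lip) (auto simp: max_def min_def abs_le_iff)
  finally show ?thesis by (simp add: mult.commute)
qed

lemma core:
  fixes g :: "'a \<Rightarrow> real"
  assumes nm: "integrable nu (\<lambda>x. norm x)" and M: "M > 0" and K: "K > 0" and B: "B > 0"
    and gK: "K-lipschitz_on UNIV g" and gz: "\<And>k. k < M \<Longrightarrow> \<bar>g (z k)\<bar> \<le> B"
    and gae: "AE x in nu. \<bar>g x\<bar> \<le> B" and g0: "(\<integral>x. g x \<partial>nu) = 0"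
    and hyp: "\<And>h. 1-lipschitz_on UNIV h \<Longrightarrow> \<bar>(\<integral>x. h x \<partial>nu) - emp_mean M z h\<bar> < kappa"
  shows "\<bar>emp_var M z g - (\<integral>x. (g x)\<^sup>2 \<partial>nu)\<bar> \<le> 3 * B * K * kappa"
proof -
  have gm: "g \<in> borel_measurable nu" using lip_meas[OF gK] .
  have l1: "1-lipschitz_on UNIV (\<lambda>x. g x / K)"
  proof (intro lipschitz_onI)
    fix x y
    have "dist (g x) (g y) \<le> K * dist x y" using lipschitz_onD[OF gK] by simp
    then show "dist (g x / K) (g y / K) \<le> 1 * dist x y"
      using K by (simp add: dist_real_def diff_divide_distrib[symmetric] field_simps)
  qed simp
  have e1: "emp_mean M z (\<lambda>x. g x / K) = emp_mean M z g / K"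
    by (simp add: emp_mean_def sum_divide_distrib mult.commute)
  have "(\<integral>x. g x / K \<partial>nu) = 0" using g0 by simp
  with hyp[OF l1] e1 have "\<bar>emp_mean M z g / K\<bar> < kappa" by (simp add: g0)
  then have m1: "\<bar>emp_mean M z g\<bar> \<le> K * kappa" using K by (simp add: field_simps)
  have "\<bar>\<Sum>k<M. g (z k)\<bar> \<le> (\<Sum>k<M. B)"
    by (rule order_trans[OF sum_abs sum_mono]) (simp add: gz)
  then have "\<bar>\<Sum>k<M. g (z k)\<bar> / real M \<le> real M * B / real M"
    by (intro divide_right_mono) auto
  then have m2: "\<bar>emp_mean M z g\<bar> \<le> B" using M by (simp add: emp_mean_def)
  have "\<bar>emp_mean M z g\<bar> * \<bar>emp_mean M z g\<bar> \<le> B * (K * kappa)"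
    using m1 m2 B by (intro mult_mono) auto
  then have sq: "(emp_mean M z g)\<^sup>2 \<le> B * (K * kappa)"
    by (simp add: power2_eq_square abs_mult[symmetric])
  define cl where "cl x = max (-B) (min B (g x))" for x
  define h2 where "h2 x = (cl x)\<^sup>2 / (2 * B * K)" for x
  have l2: "1-lipschitz_on UNIV h2"
  proof (intro lipschitz_onI)
    fix x y
    have "\<bar>(cl x)\<^sup>2 - (cl y)\<^sup>2\<bar> \<le> 2 * B * \<bar>g x - g y\<bar>"
      unfolding cl_def using clip_sq_lip[OF B] .
    also have "\<dots> \<le> 2 * B * (K * dist x y)"
      using lipschitz_onD[OF gK, of x y] B by (simp add: dist_real_def)
    finally show "dist (h2 x) (h2 y) \<le> 1 * dist x y"
      using B K by (simp add: h2_def dist_real_def diff_divide_distrib[symmetric] field_simps)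
  qed simp
  have clm: "cl \<in> borel_measurable nu" unfolding cl_def using gm by measurable
  have "AE x in nu. h2 x = (g x)\<^sup>2 / (2 * B * K)"
    using gae by eventually_elim (auto simp: h2_def cl_def abs_le_iff max_def min_def)
  moreover have "h2 \<in> borel_measurable nu" unfolding h2_def using clm by measurable
  moreover have "(\<lambda>x. (g x)\<^sup>2 / (2 * B * K)) \<in> borel_measurable nu" using gm by measurable
  ultimately have "(\<integral>x. h2 x \<partial>nu) = (\<integral>x. (g x)\<^sup>2 / (2 * B * K) \<partial>nu)"
    by (intro integral_cong_AE) auto
  then have i2: "(\<integral>x. h2 x \<partial>nu) = (\<integral>x. (g x)\<^sup>2 \<partial>nu) / (2 * B * K)"
    by simp
  have clz: "cl (z k) = g (z k)" if "k < M" for k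
    using gz[OF that] unfolding cl_def by (simp add: abs_le_iff max_def min_def)
  have "emp_mean M z h2 = emp_mean M z (\<lambda>x. (g x)\<^sup>2) / (2 * B * K)"
  proof -
    have "(\<Sum>k<M. h2 (z k)) = (\<Sum>k<M. (g (z k))\<^sup>2) / (2 * B * K)"
      unfolding sum_divide_distrib h2_def by (intro sum.cong) (simp_all add: clz)
    then show ?thesis unfolding emp_mean_def by simp
  qed
  with hyp[OF l2] i2 have "\<bar>(\<integral>x. (g x)\<^sup>2 \<partial>nu) / (2 * B * K) - emp_mean M z (\<lambda>x. (g x)\<^sup>2) / (2 * B * K)\<bar> < kappa"
    by simp
  note that_ = this
  then have m3: "\<bar>(\<integral>x. (g x)\<^sup>2 \<partial>nu) - emp_mean M z (\<lambda>x. (g x)\<^sup>2)\<bar> \<le> 2 * B * K * kappa"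
  proof -
    have "\<bar>((\<integral>x. (g x)\<^sup>2 \<partial>nu) - emp_mean M z (\<lambda>x. (g x)\<^sup>2)) / (2 * B * K)\<bar> < kappa"
      using that_ by (simp add: diff_divide_distrib)
    then have "\<bar>(\<integral>x. (g x)\<^sup>2 \<partial>nu) - emp_mean M z (\<lambda>x. (g x)\<^sup>2)\<bar> / (2 * B * K) < kappa"
      using B K by simp
    then show ?thesis using B K by (simp add: divide_less_eq mult.commute mult.left_commute)
  qed
  have "0 \<le> (emp_mean M z g)\<^sup>2" by simp
  moreover have "3 * B * K * kappa = 2 * B * K * kappa + B * (K * kappa)" by (simp add: algebra_simps)
  ultimately show ?thesis using m3 sq unfolding emp_var_def abs_le_iff by linarith
qed

lemma support_null:
  "\<exists>U\<in>null_sets nu. \<forall>S x. open S \<longrightarrow> x \<in> S \<longrightarrow> x \<notin> U \<longrightarrow> S \<notin> null_sets nu"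
proof -
  obtain BB :: "'a set set" where cB: "countable BB" and oB: "\<And>C. C \<in> BB \<Longrightarrow> open C"
    and bB: "\<And>S. open S \<Longrightarrow> \<exists>U. U \<subseteq> BB \<and> S = \<Union>U"
    using univ_second_countable by blast
  define U where "U = (\<Union>b\<in>{b\<in>BB. b \<in> null_sets nu}. b)"
  have "U \<in> null_sets nu" unfolding U_def
    by (rule null_sets_UN') (use cB in auto)
  moreover have "S \<notin> null_sets nu" if "open S" "x \<in> S" "x \<notin> U" for S x
  proof
    assume Sn: "S \<in> null_sets nu"
    obtain W where W: "W \<subseteq> BB" "S = \<Union>W" using bB[OF \<open>open S\<close>] by blast
    then obtain b where b: "b \<in> W" "x \<in> b" using \<open>x \<in> S\<close> by blast
    have "b \<in> sets nu" using oB[of b] W b nu_borel by auto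
    then have "b \<in> null_sets nu" using null_sets_subset[OF Sn] W b by blast
    then have "x \<in> U" unfolding U_def using W b by blast
    then show False using that by blast
  qed
  ultimately show ?thesis by blast
qed

lemma bound_off_null:
  fixes g :: "'a \<Rightarrow> real"
  assumes U: "\<forall>S x. open S \<longrightarrow> x \<in> S \<longrightarrow> x \<notin> U \<longrightarrow> S \<notin> null_sets nu"
    and gc: "continuous_on UNIV g" and ae: "AE x in nu. \<bar>g x\<bar> \<le> B" and x: "x \<notin> U"
  shows "\<bar>g x\<bar> \<le> B"
proof (rule ccontr)
  assume "\<not> \<bar>g x\<bar> \<le> B"
  then have xS: "x \<in> {y. B < \<bar>g y\<bar>}" by simp
  have oS: "open {y. B < \<bar>g y\<bar>}"
    by (intro open_Collect_less continuous_intros) (use gc continuous_on_eq_continuous_at in auto)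
  obtain N where N: "{y \<in> space nu. \<not> \<bar>g y\<bar> \<le> B} \<subseteq> N" "N \<in> null_sets nu"
    using ae by (auto elim!: AE_E)
  have "{y. B < \<bar>g y\<bar>} \<in> sets nu" using oS nu_borel by auto
  moreover have "{y. B < \<bar>g y\<bar>} \<subseteq> N" using N(1) space_nu by auto
  ultimately have "{y. B < \<bar>g y\<bar>} \<in> null_sets nu"
    using null_sets_subset[OF N(2)] by blast
  then show False using U oS xS x by blast
qed

lemma C_ge1:
  fixes c C alpha :: real
  assumes nm: "integrable nu (\<lambda>x. norm x)" and c: "c > 0" and Cp: "C > 0"
    and FG: "\<And>(M::nat) (k::real). k > 0 \<Longrightarrow>
       \<exists>A\<in>sets (PiM {..<M} (\<lambda>_. nu)).
          {z \<in> space (PiM {..<M} (\<lambda>_. nu)).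
             k \<le> (SUP h\<in>{h::'a \<Rightarrow> real. 1-lipschitz_on UNIV h}.
                    \<bar>(\<integral>x. h x \<partial>nu) - emp_mean M z h\<bar>)} \<subseteq> A
          \<and> measure (PiM {..<M} (\<lambda>_. nu)) A \<le> C * exp (- c * real M * phi_FG DIM('a) alpha k)"
    and phi: "\<And>k. k > 0 \<Longrightarrow> phi_FG DIM('a) alpha k \<ge> 0"
    and Dpos: "\<And>y. (\<integral>x. dist x y \<partial>nu) > 0"
  shows "1 \<le> C"
proof -
  let ?P = "PiM {..<Suc 0} (\<lambda>_. nu)"
  interpret P: prob_space ?P by (intro prob_space_PiM prob_space_axioms)
  let ?S = "\<lambda>z. (SUP h\<in>{h::'a \<Rightarrow> real. 1-lipschitz_on UNIV h}.
                    \<bar>(\<integral>x. h x \<partial>nu) - emp_mean (Suc 0) z h\<bar>)"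
  have ex: "\<exists>A. A \<in> sets ?P \<and> {z \<in> space ?P. 1 / real (Suc n) \<le> ?S z} \<subseteq> A \<and> measure ?P A \<le> C" for n
  proof -
    obtain A where A: "A \<in> sets ?P" "{z \<in> space ?P. 1 / real (Suc n) \<le> ?S z} \<subseteq> A"
      "measure ?P A \<le> C * exp (- c * real (Suc 0) * phi_FG DIM('a) alpha (1 / real (Suc n)))"
      using FG[of "1 / real (Suc n)" "Suc 0"] by auto
    have "exp (- c * real (Suc 0) * phi_FG DIM('a) alpha (1 / real (Suc n))) \<le> 1"
      using phi[of "1 / real (Suc n)"] c by simp
    then have "C * exp (- c * real (Suc 0) * phi_FG DIM('a) alpha (1 / real (Suc n))) \<le> C * 1"
      using Cp by (intro mult_left_mono) auto
    then have "measure ?P A \<le> C"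
      using A(3) by linarith
    then show ?thesis using A(1,2) by blast
  qed
  obtain A where A0: "\<forall>n. A n \<in> sets ?P \<and> {z \<in> space ?P. 1 / real (Suc n) \<le> ?S z} \<subseteq> A n \<and> measure ?P (A n) \<le> C"
    using choice[of "\<lambda>n A. A \<in> sets ?P \<and> {z \<in> space ?P. 1 / real (Suc n) \<le> ?S z} \<subseteq> A \<and> measure ?P A \<le> C"] ex
    by blast
  have A: "\<And>n. A n \<in> sets ?P" "\<And>n. {z \<in> space ?P. 1 / real (Suc n) \<le> ?S z} \<subseteq> A n"
    "\<And>n. measure ?P (A n) \<le> C"
    using A0 by blast+
  define A' where "A' n = (\<Inter>m\<in>{n..}. A m)" for n
  have A's: "A' n \<in> sets ?P" for n
    unfolding A'_def by (intro sets.countable_INT') (auto intro: A)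
  have inc: "incseq A'" unfolding A'_def incseq_def by auto
  have A'C: "measure ?P (A' n) \<le> C" for n
  proof -
    have "measure ?P (A' n) \<le> measure ?P (A n)"
      by (intro P.finite_measure_mono) (auto simp: A'_def intro: A)
    then show ?thesis using A(3)[of n] by simp
  qed
  have cover: "space ?P \<subseteq> (\<Union>n. A' n)"
  proof
    fix z assume z: "z \<in> space ?P"
    define D where "D = (\<integral>x. dist x (z 0) \<partial>nu)"
    have D: "D > 0" unfolding D_def using Dpos .
    obtain n where n: "inverse (real (Suc n)) < D" using reals_Archimedean[OF D] by blast
    have "D \<le> ?S z"
    proof -
      have l: "1-lipschitz_on UNIV (\<lambda>x. dist x (z 0))"
        by (intro lipschitz_onI) (auto simp: dist_real_def abs_le_iff, (metis dist_commute dist_triangle2 add.commute diff_le_eq)+)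
      have "\<bar>(\<integral>x. dist x (z 0) \<partial>nu) - emp_mean (Suc 0) z (\<lambda>x. dist x (z 0))\<bar> = D"
        using D unfolding D_def emp_mean_def by simp
      moreover have "bdd_above ((\<lambda>h. \<bar>(\<integral>x. h x \<partial>nu) - emp_mean (Suc 0) z h\<bar>) ` {h::'a \<Rightarrow> real. 1-lipschitz_on UNIV h})"
        using emp_bound[OF nm, of "Suc 0"] by (intro bdd_aboveI[where M="(\<Sum>k<Suc 0. \<integral>x. dist x (z k) \<partial>nu) / real (Suc 0)"]) auto
      ultimately show ?thesis using l by (metis (no_types, lifting) cSUP_upper mem_Collect_eq)
    qed
    have "z \<in> A m" if "m \<ge> n" for m
    proof -
      have "1 / real (Suc m) \<le> 1 / real (Suc n)" using that by (simp add: frac_le)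
      then have "1 / real (Suc m) \<le> ?S z" using n \<open>D \<le> ?S z\<close> by (simp add: inverse_eq_divide)
      then show ?thesis using A(2)[of m] z by blast
    qed
    then show "z \<in> (\<Union>n. A' n)" unfolding A'_def by blast
  qed
  have "(\<Union>n. A' n) \<subseteq> space ?P" using A's sets.sets_into_space by blast
  with cover have U: "(\<Union>n. A' n) = space ?P" by blast
  have "(\<lambda>n. measure ?P (A' n)) \<longlonglongrightarrow> measure ?P (\<Union>n. A' n)"
    by (intro P.finite_Lim_measure_incseq inc) (use A's in auto)
  then have "measure ?P (\<Union>n. A' n) \<le> C" by (rule LIMSEQ_le_const2) (use A'C in auto)
  then show ?thesis using U P.prob_space by simp
qed

lemma lip_const_self:
  fixes h :: "'a \<Rightarrow> real"
  assumes "\<exists>L. L-lipschitz_on UNIV h"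
  shows "(lip_const h)-lipschitz_on UNIV h"
proof -
  let ?S = "{L. L-lipschitz_on UNIV h}"
  have ne: "?S \<noteq> {}" using assms by blast
  have nn: "0 \<le> lip_const h" unfolding lip_const_def
    by (rule cInf_greatest[OF ne]) (auto dest: lipschitz_on_nonneg)
  show ?thesis
  proof (rule lipschitz_onI[OF _ nn])
    fix x y :: 'a
    show "dist (h x) (h y) \<le> lip_const h * dist x y"
    proof (cases "x = y")
      case False
      then have d: "dist x y > 0" by simp
      have "dist (h x) (h y) / dist x y \<le> lip_const h" unfolding lip_const_def
      proof (rule cInf_greatest[OF ne])
        fix L assume "L \<in> ?S"
        then have "dist (h x) (h y) \<le> L * dist x y" by (auto dest: lipschitz_onD)
        then show "dist (h x) (h y) / dist x y \<le> L" using d by (simp add: divide_le_eq)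
      qed
      then show ?thesis using d by (simp add: divide_le_eq)
    qed simp
  qed
qed

end

lemma phi_pos: "k > 0 \<Longrightarrow> phi_FG d alpha k > 0"
proof -
  assume k: "k > 0"
  then have "ln (2 + 1 / k) > 0" by (intro ln_gt_zero) (simp add: add_pos_pos)
  then show ?thesis using k unfolding phi_FG_def by auto
qed




theorem lemma3:
  fixes nu :: "'a::euclidean_space measure"
    and P :: "'p::euclidean_space set"
    and f :: "'p \<Rightarrow> 'a \<Rightarrow> real"
    and alpha beta c C gamma delta1 :: real
    and M1 :: nat
    and sel :: "(nat \<Rightarrow> 'a) \<Rightarrow> 'p"
  assumes nu_prob: "prob_space nu"
    and nu_borel: "sets nu = sets borel"
    \<comment> \<open>Assumption (A)\<close>
    and alpha: "alpha > 1" and beta: "beta > 0"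
    and expmom: "integrable nu (\<lambda>x. exp (beta * norm x powr alpha))"
    \<comment> \<open>Fournier--Guillin concentration constants c, C\<close>
    and cC: "c > 0" "C > 0"
    and FG: "\<And>(M::nat) (k::real). k > 0 \<Longrightarrow>
       \<exists>A\<in>sets (PiM {..<M} (\<lambda>_. nu)).
          {z \<in> space (PiM {..<M} (\<lambda>_. nu)).
             k \<le> (SUP h\<in>{h::'a \<Rightarrow> real. 1-lipschitz_on UNIV h}.
                    \<bar>(\<integral>x. h x \<partial>nu) - emp_mean M z h\<bar>)} \<subseteq> A
          \<and> measure (PiM {..<M} (\<lambda>_. nu)) A \<le> C * exp (- c * real M * phi_FG DIM('a) alpha k)"
    \<comment> \<open>standing assumptions on f\<close>
    and f_cont: "\<And>mu. mu \<in> P \<Longrightarrow> continuous_on UNIV (f mu)"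
    and f_L2: "\<And>mu. mu \<in> P \<Longrightarrow> f mu \<in> borel_measurable nu \<and> integrable nu (\<lambda>x. (f mu x)\<^sup>2)"
    \<comment> \<open>(B1) compactness of M in L^2 (sequential compactness) and K_2 finite\<close>
    and B1_compact: "\<And>s::nat \<Rightarrow> 'p. (\<forall>n. s n \<in> P) \<Longrightarrow>
       \<exists>r mu. strict_mono r \<and> mu \<in> P \<and>
          (\<lambda>n. l2dist nu (centered nu f (s (r n))) (centered nu f mu)) \<longlonglongrightarrow> 0"
    and B1_K2: "bdd_above ((\<lambda>mu. sqrt (var_nu nu (centered nu f mu))) ` P)"
    \<comment> \<open>(B2) Lipschitz with bounded constants\<close>
    and B2_lip: "\<And>mu. mu \<in> P \<Longrightarrow> \<exists>L. L-lipschitz_on UNIV (centered nu f mu)"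
    and B2_K: "bdd_above ((\<lambda>mu. lip_const (centered nu f mu)) ` P)"
    \<comment> \<open>(B3) essentially bounded with bounded norms\<close>
    and B3: "(SUP mu\<in>P. linf_norm nu (centered nu f mu)) < \<infinity>"
    \<comment> \<open>(B4) positive Kolmogorov widths\<close>
    and B4: "\<And>n. kolmogorov_width nu (centered nu f) P n > 0"
    \<comment> \<open>parameters\<close>
    and gamma: "0 < gamma" "gamma < 1"
    and delta1: "0 < delta1" "delta1 < 1"
    and M1: "real M1 \<ge> - ln (delta1 / C) * (1 / (c * phi_FG DIM('a) alpha
          ((1 - gamma\<^sup>2) * (SUP mu\<in>P. var_nu nu (centered nu f mu))
           / (8 * real_of_ereal (SUP mu\<in>P. linf_norm nu (centered nu f mu))
                * (SUP mu\<in>P. lip_const (centered nu f mu))))))"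
    \<comment> \<open>first step of the MC-greedy algorithm: an empirical-variance maximiser with g nonzero\<close>
    and sel: "\<And>z. z \<in> space (PiM {..<M1} (\<lambda>_. nu)) \<Longrightarrow>
       sel z \<in> P \<and>
       (\<forall>mu\<in>P. emp_var M1 z (centered nu f mu) \<le> emp_var M1 z (centered nu f (sel z))) \<and>
       \<not> (AE x in nu. centered nu f (sel z) x = 0)"
  shows "\<exists>A\<in>sets (PiM {..<M1} (\<lambda>_. nu)).
           measure (PiM {..<M1} (\<lambda>_. nu)) A \<ge> 1 - delta1 \<and>
           A \<subseteq> {z \<in> space (PiM {..<M1} (\<lambda>_. nu)).
                  var_nu nu (centered nu f (sel z))
                    \<ge> gamma\<^sup>2 * (SUP mu\<in>P. var_nu nu (centered nu f mu))}"
proof -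
  interpret nuctx nu using nu_prob nu_borel by (simp add: nuctx_def nuctx_axioms_def)
  define g where "g = centered nu f"
  let ?PM = "PiM {..<M1} (\<lambda>_. nu)"
  interpret PM: prob_space ?PM by (intro prob_space_PiM prob_space_axioms)
  have nm: "integrable nu (\<lambda>x. norm x)" using first_moment[OF alpha beta expmom] .
  obtain z0 where z0: "z0 \<in> space ?PM" using PM.not_empty by blast
  define mu0 where "mu0 = sel z0"
  have mu0: "mu0 \<in> P" "\<not> (AE x in nu. g mu0 x = 0)" using sel[OF z0] unfolding mu0_def g_def by auto
  then have Pne: "P \<noteq> {}" by blast
  have g_eq: "g mu x = f mu x - (\<integral>y. f mu y \<partial>nu)" for mu x unfolding g_def centered_def by simp
  have fint: "integrable nu (f mu)" if "mu \<in> P" for mu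
    using f_L2[OF that] square_integrable_imp_integrable by blast
  have gmeas: "g mu \<in> borel_measurable nu" if "mu \<in> P" for mu
  proof -
    have fm: "f mu \<in> borel_measurable nu" using f_L2[OF that] by blast
    have "g mu = (\<lambda>x. f mu x - (\<integral>y. f mu y \<partial>nu))" by (rule ext) (simp add: g_eq)
    then show ?thesis using fm by simp
  qed
  have gint0: "(\<integral>x. g mu x \<partial>nu) = 0" if "mu \<in> P" for mu
    unfolding g_eq using fint[OF that] by (simp add: prob_space)
  have gsqint: "integrable nu (\<lambda>x. (g mu x)\<^sup>2)" if "mu \<in> P" for mu
  proof -
    have "(\<lambda>x. (g mu x)\<^sup>2) = (\<lambda>x. (f mu x)\<^sup>2 - 2 * (\<integral>y. f mu y \<partial>nu) * f mu x + (\<integral>y. f mu y \<partial>nu)\<^sup>2)"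
      unfolding g_eq by (simp add: power2_diff algebra_simps)
    then show ?thesis using f_L2[OF that] fint[OF that] by simp
  qed
  have var_eq: "var_nu nu (g mu) = (\<integral>x. (g mu x)\<^sup>2 \<partial>nu)" if "mu \<in> P" for mu
    unfolding var_nu_def using gint0[OF that] by simp
  have var_nn: "var_nu nu (g mu) \<ge> 0" if "mu \<in> P" for mu
    unfolding var_eq[OF that] by simp
  have gcont: "continuous_on UNIV (g mu)" if "mu \<in> P" for mu
    unfolding g_eq using f_cont[OF that] by (intro continuous_intros) auto
  define sig where "sig = (SUP mu\<in>P. var_nu nu (g mu))"
  have bddv: "bdd_above ((\<lambda>mu. var_nu nu (g mu)) ` P)"
  proof -
    obtain b where b: "\<And>mu. mu \<in> P \<Longrightarrow> sqrt (var_nu nu (g mu)) \<le> b"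
      using B1_K2 unfolding g_def bdd_above_def by auto
    have "var_nu nu (g mu) \<le> b\<^sup>2" if "mu \<in> P" for mu
    proof -
      have "var_nu nu (g mu) = (sqrt (var_nu nu (g mu)))\<^sup>2" using var_nn[OF that] by simp
      also have "\<dots> \<le> b\<^sup>2" using b[OF that] var_nn[OF that] by (intro power_mono) auto
      finally show ?thesis .
    qed
    then show ?thesis by (intro bdd_aboveI[where M="b\<^sup>2"]) auto
  qed
  have var_le: "var_nu nu (g mu) \<le> sig" if "mu \<in> P" for mu
    unfolding sig_def using bddv that by (rule cSUP_upper2) simp
  have var0: "var_nu nu (g mu0) > 0"
  proof -
    have "(\<integral>x. (g mu0 x)\<^sup>2 \<partial>nu) \<noteq> 0"
    proof
      assume "(\<integral>x. (g mu0 x)\<^sup>2 \<partial>nu) = 0"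
      then have "AE x in nu. (g mu0 x)\<^sup>2 = 0"
        using integral_nonneg_eq_0_iff_AE[OF gsqint[OF mu0(1)]] by simp
      then have "AE x in nu. g mu0 x = 0" by simp
      then show False using mu0(2) by blast
    qed
    then show ?thesis using var_nn[OF mu0(1)] var_eq[OF mu0(1)] by linarith
  qed
  have sig: "sig > 0" using var0 var_le[OF mu0(1)] by simp
  define Sinf where "Sinf = (SUP mu\<in>P. linf_norm nu (g mu))"
  define B where "B = real_of_ereal Sinf"
  have linf_le: "linf_norm nu (g mu) \<le> Sinf" if "mu \<in> P" for mu
    unfolding Sinf_def using that by (rule SUP_upper)
  have linf0: "linf_norm nu (g mu0) > 0"
  proof (rule ccontr)
    assume "\<not> linf_norm nu (g mu0) > 0"
    then have le0: "linf_norm nu (g mu0) \<le> 0" by simp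
    have "AE x in nu. ereal \<bar>g mu0 x\<bar> \<le> linf_norm nu (g mu0)"
      unfolding linf_norm_def by (rule esssup_AE)
    then have "AE x in nu. ereal \<bar>g mu0 x\<bar> \<le> 0"
      by eventually_elim (metis le0 order_trans)
    then have "AE x in nu. g mu0 x = 0" by eventually_elim simp
    then show False using mu0(2) by blast
  qed
  have Sinf_pos: "Sinf > 0" using linf0 linf_le[OF mu0(1)] by simp
  have Sinf_fin: "Sinf < \<infinity>" using B3 unfolding Sinf_def g_def .
  have B: "B > 0" and SB: "Sinf = ereal B"
    using Sinf_pos Sinf_fin unfolding B_def by (cases Sinf; simp)+
  have gae: "AE x in nu. \<bar>g mu x\<bar> \<le> B" if "mu \<in> P" for mu
  proof -
    have "AE x in nu. ereal \<bar>g mu x\<bar> \<le> linf_norm nu (g mu)"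
      using esssup_AE unfolding linf_norm_def .
    moreover have l: "linf_norm nu (g mu) \<le> ereal B" using linf_le[OF that] unfolding SB .
    note this
    from calculation(1) show ?thesis
      by eventually_elim (metis l ereal_less_eq(3) order_trans)
  qed
  define K where "K = (SUP mu\<in>P. lip_const (g mu))"
  have lipK: "K-lipschitz_on UNIV (g mu)" if "mu \<in> P" for mu
  proof -
    have "lip_const (g mu) \<le> K" unfolding K_def
      using B2_K that unfolding g_def by (intro cSUP_upper2) auto
    then show ?thesis using lip_const_self[of "g mu"] B2_lip[OF that] unfolding g_def
      by (metis lipschitz_on_le)
  qed
  have K: "K > 0"
  proof (rule ccontr)
    assume "\<not> K > 0"
    moreover have "K \<ge> 0" using lipK[OF mu0(1)] by (rule lipschitz_on_nonneg)
    ultimately have "K = 0" by simp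
    then have c: "g mu0 x = g mu0 0" for x using lipschitz_onD[OF lipK[OF mu0(1)], of x 0] by simp
    have "(\<integral>x. g mu0 x \<partial>nu) = (\<integral>x. g mu0 0 \<partial>nu)"
      by (rule Bochner_Integration.integral_cong[OF refl c])
    then have "g mu0 0 = 0" using gint0[OF mu0(1)] by (simp add: prob_space)
    then have "AE x in nu. g mu0 x = 0" using c by simp
    then show False using mu0(2) by blast
  qed
  define kap where "kap = (1 - gamma\<^sup>2) * sig / (8 * B * K)"
  have g2: "gamma\<^sup>2 < 1" using gamma by (simp add: power_less_one_iff abs_less_iff)
  have kap: "kap > 0" unfolding kap_def using g2 sig B K by simp
  have phik: "phi_FG DIM('a) alpha kap > 0" using phi_pos[OF kap] .
  have Dpos: "(\<integral>x. dist x y \<partial>nu) > 0" for y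
  proof (rule ccontr)
    assume "\<not> (\<integral>x. dist x y \<partial>nu) > 0"
    moreover have "(\<integral>x. dist x y \<partial>nu) \<ge> 0" by simp
    ultimately have "(\<integral>x. dist x y \<partial>nu) = 0" by simp
    then have "AE x in nu. dist x y = 0"
      using integral_nonneg_eq_0_iff_AE[OF dist_integrable[OF nm]] by simp
    then have ae: "AE x in nu. x = y" by simp
    then have "AE x in nu. f mu0 x = f mu0 y" by eventually_elim simp
    then have "(\<integral>x. f mu0 x \<partial>nu) = (\<integral>x. f mu0 y \<partial>nu)"
      using f_L2[OF mu0(1)] by (intro integral_cong_AE) auto
    then have fy: "(\<integral>x. f mu0 x \<partial>nu) = f mu0 y" by (simp add: prob_space)
    from ae have "AE x in nu. g mu0 x = 0" by eventually_elim (simp add: g_eq fy)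
    then show False using mu0(2) by blast
  qed
  have C1: "1 \<le> C"
    using C_ge1[OF nm cC(1) cC(2) FG _ Dpos] phi_pos by (simp add: less_imp_le)
  have lnpos: "ln (C / delta1) > 0" using C1 delta1 by (intro ln_gt_zero) (simp add: field_simps)
  have M1k: "real M1 \<ge> - ln (delta1 / C) * (1 / (c * phi_FG DIM('a) alpha kap))"
    using M1 unfolding kap_def sig_def B_def Sinf_def K_def g_def .
  have lnq: "- ln (delta1 / C) = ln (C / delta1)"
    using delta1 cC by (simp add: ln_div)
  have M1': "real M1 \<ge> ln (C / delta1) / (c * phi_FG DIM('a) alpha kap)"
    using M1k unfolding lnq by simp
  have cp: "c * phi_FG DIM('a) alpha kap > 0" using cC phik by simp
  then have Mc: "real M1 * (c * phi_FG DIM('a) alpha kap) \<ge> ln (C / delta1)"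
    using M1' by (simp add: divide_le_eq)
  have M1pos: "M1 > 0"
  proof (rule ccontr)
    assume "\<not> M1 > 0" then have "M1 = 0" by simp
    then show False using Mc lnpos by simp
  qed
  have Cexp: "C * exp (- c * real M1 * phi_FG DIM('a) alpha kap) \<le> delta1"
  proof -
    have "- c * real M1 * phi_FG DIM('a) alpha kap = - (real M1 * (c * phi_FG DIM('a) alpha kap))"
      by (simp add: mult_ac)
    then have "exp (- c * real M1 * phi_FG DIM('a) alpha kap) \<le> exp (- ln (C / delta1))"
      using Mc by (simp only: exp_le_cancel_iff)
    also have "\<dots> = delta1 / C" using delta1 cC by (simp add: exp_minus)
    finally have "C * exp (- c * real M1 * phi_FG DIM('a) alpha kap) \<le> C * (delta1 / C)"
      using cC by (intro mult_left_mono) auto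
    then show ?thesis using cC by simp
  qed
  obtain AF where AF: "AF \<in> sets ?PM"
    "{z \<in> space ?PM. kap \<le> (SUP h\<in>{h::'a \<Rightarrow> real. 1-lipschitz_on UNIV h}.
                    \<bar>(\<integral>x. h x \<partial>nu) - emp_mean M1 z h\<bar>)} \<subseteq> AF"
    "measure ?PM AF \<le> delta1"
    using FG[OF kap, of M1] Cexp by force
  obtain U where U: "U \<in> null_sets nu" "\<forall>S x. open S \<longrightarrow> x \<in> S \<longrightarrow> x \<notin> U \<longrightarrow> S \<notin> null_sets nu"
    using support_null by blast
  define GG where "GG = PiE {..<M1} (\<lambda>_. space nu - U)"
  have GGs: "GG \<in> sets ?PM" unfolding GG_def using U(1) by (intro sets_PiM_I_finite) auto
  have GGsp: "GG \<subseteq> space ?PM" unfolding GG_def space_PiM by auto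
  have "emeasure ?PM GG = 1"
  proof -
    have psf: "product_sigma_finite (\<lambda>_. nu)"
      unfolding product_sigma_finite_def by (simp add: prob_space_imp_sigma_finite prob_space_axioms)
    have "emeasure ?PM GG = (\<Prod>i<M1. emeasure nu (space nu - U))"
      unfolding GG_def using U(1) by (intro product_sigma_finite.emeasure_PiM[OF psf]) auto
    also have "emeasure nu (space nu - U) = 1"
      using U(1) by (subst emeasure_compl) (auto simp: emeasure_space_1)
    finally show ?thesis by simp
  qed
  then have mGG: "measure ?PM GG = 1" by (simp add: PM.emeasure_eq_measure)
  define A where "A = GG - AF"
  have As: "A \<in> sets ?PM" unfolding A_def using GGs AF(1) by auto
  have mA: "measure ?PM A \<ge> 1 - delta1"
  proof -
    have "measure ?PM A = measure ?PM GG - measure ?PM (GG \<inter> AF)"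
      unfolding A_def using GGs AF(1) by (rule PM.finite_measure_Diff')
    moreover have "measure ?PM (GG \<inter> AF) \<le> measure ?PM AF"
      using AF(1) by (intro PM.finite_measure_mono) auto
    ultimately show ?thesis using mGG AF(3) by simp
  qed
  have sub: "A \<subseteq> {z \<in> space ?PM. var_nu nu (g (sel z)) \<ge> gamma\<^sup>2 * sig}"
  proof
    fix z assume zA: "z \<in> A"
    then have zsp: "z \<in> space ?PM" using GGsp unfolding A_def by blast
    have zU: "z k \<notin> U" if "k < M1" for k using zA that unfolding A_def GG_def by auto
    let ?T = "(\<lambda>h. \<bar>(\<integral>x. h x \<partial>nu) - emp_mean M1 z h\<bar>) ` {h::'a \<Rightarrow> real. 1-lipschitz_on UNIV h}"
    have bdd: "bdd_above ?T"
      using emp_bound[OF nm M1pos] by (intro bdd_aboveI[where M="(\<Sum>k<M1. \<integral>x. dist x (z k) \<partial>nu) / real M1"]) auto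
    have "\<not> kap \<le> Sup ?T" using zA zsp AF(2) unfolding A_def by blast
    then have hyp: "\<bar>(\<integral>x. h x \<partial>nu) - emp_mean M1 z h\<bar> < kap" if "1-lipschitz_on UNIV h" for h
      using cSUP_upper[OF _ bdd, of h] that by simp
    have close: "\<bar>emp_var M1 z (g mu) - var_nu nu (g mu)\<bar> \<le> 3 * B * K * kap" if mu: "mu \<in> P" for mu
      unfolding var_eq[OF mu]
    proof (rule core[OF nm M1pos K B lipK[OF mu] _ gae[OF mu] gint0[OF mu] hyp])
      fix k assume "k < M1"
      then show "\<bar>g mu (z k)\<bar> \<le> B" using bound_off_null[OF U(2) gcont[OF mu] gae[OF mu] zU] by blast
    qed
    have sz: "sel z \<in> P" "\<forall>mu\<in>P. emp_var M1 z (g mu) \<le> emp_var M1 z (g (sel z))"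
      using sel[OF zsp] unfolding g_def by auto
    have BKk: "B * K * kap = (1 - gamma\<^sup>2) * sig / 8" unfolding kap_def using B K by simp
    have "var_nu nu (g mu) \<le> var_nu nu (g (sel z)) + 6 * (B * K * kap)" if mu: "mu \<in> P" for mu
      using close[OF mu] close[OF sz(1)] sz(2) mu by (auto simp: abs_le_iff)
    then have "sig \<le> var_nu nu (g (sel z)) + 6 * (B * K * kap)"
      unfolding sig_def using Pne by (intro cSUP_least) auto
    moreover have "6 * (B * K * kap) = 3 / 4 * ((1 - gamma\<^sup>2) * sig)" unfolding BKk by simp
    ultimately have "sig \<le> var_nu nu (g (sel z)) + 3 / 4 * ((1 - gamma\<^sup>2) * sig)" by linarith
    moreover have "(1 - gamma\<^sup>2) * sig \<ge> 0" using g2 sig by simp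
    moreover have "gamma\<^sup>2 * sig = sig - (1 - gamma\<^sup>2) * sig" by (simp add: algebra_simps)
    ultimately have "var_nu nu (g (sel z)) \<ge> gamma\<^sup>2 * sig" by linarith
    then show "z \<in> {z \<in> space ?PM. var_nu nu (g (sel z)) \<ge> gamma\<^sup>2 * sig}" using zsp by blast
  qed
  show ?thesis using As mA sub unfolding g_def sig_def by blast
qed


end
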